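(* Let $s,t$ be real numbers. Then $\det U_4^{(rc)} = 3s^2t^2$, $\det U_5^{(rc)} = s^4t + 4s^2t^3$, and for every $n \geq 6$, $$\det U_n^{(rc)} = t\,\det U_{n-1}^{(rc)} + s^2 \det U_{n-2}^{(rc)}.$$
   Context: For $n\ge 1$, $U_n=U_n(s,t)$ is the $n\times n$ upper Hessenberg matrix with subdiagonal entries $a_{i+1,i}=s$, $a_{ij}=0$ for $i>j+1$, $a_{ij}=t$ if $j\ge i$ and $j-i$ is even, and $a_{ij}=0$ if $j>i$ and $j-i$ is odd. For $n\ge 4$, let $X_n$ be the matrix obtained from $U_n$ by replacing the $(1,1)$ entry by $s$, the $(2,1)$ entry by $t$, the $(n,n-1)$ entry by $t$ and the $(n,n)$ entry by $s$. Let $P_n^{(r)}$ be the $n\times n$ identity matrix with its first two rows interchanged and $P_n^{(c)}$ the $n\times n$ identity matrix with its last two columns interchanged, and define $U_n^{(rc)} = P_n^{(r)} X_n P_n^{(c)}$ (an upper Hessenberg matrix with subdiagonal entries $s$ and upper triangular entries in $\{0,t\}$). *)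

theory Defs
  imports "Jordan_Normal_Form.Determinant"
begin

(* Matrices are 0-indexed in Jordan_Normal_Form: paper entry (i,j) is our (i-1,j-1). *)

definition U :: "nat \<Rightarrow> real \<Rightarrow> real \<Rightarrow> real mat" where
  "U n s t = mat n n (\<lambda>(i,j).
      if i = j + 1 then s
      else if i > j + 1 then 0
      else if even (j - i) then t else 0)"

definition X :: "nat \<Rightarrow> real \<Rightarrow> real \<Rightarrow> real mat" where
  "X n s t = mat n n (\<lambda>(i,j).
      if (i,j) = (0,0) then s
      else if (i,j) = (1,0) then t
      else if (i,j) = (n-1,n-2) then t
      else if (i,j) = (n-1,n-1) then s
      else U n s t $$ (i,j))"

definition Pr :: "nat \<Rightarrow> real mat" where
  "Pr n = mat n n (\<lambda>(i,j). if j = Transposition.transpose 0 1 i then 1 else 0)"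

definition Pc :: "nat \<Rightarrow> real mat" where
  "Pc n = mat n n (\<lambda>(i,j). if i = Transposition.transpose (n-2) (n-1) j then 1 else 0)"

definition Urc :: "nat \<Rightarrow> real \<Rightarrow> real \<Rightarrow> real mat" where
  "Urc n s t = Pr n * X n s t * Pc n"

end

theory Submission imports Defs begin

lemma det_rec:
  fixes f :: "nat \<times> nat \<Rightarrow> 'a::comm_ring_1"
  assumes r1: "\<And>j. j < Suc m \<Longrightarrow> f (m+2, j) = 0"
    and r2: "\<And>j. j < m \<Longrightarrow> f (m+1, j) = 0" and r2b: "f (m+1, m+2) = 0"
    and cl: "\<And>i. i < Suc m \<Longrightarrow> f (i, m+2) = f (i, m)"
  shows "det (mat (m+3) (m+3) f) = f (m+2,m+2) * det (mat (m+2) (m+2) f)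
          + f (m+2,m+1) * f (m+1,m) * det (mat (m+1) (m+1) f)"
proof -
  let ?A = "mat (m+3) (m+3) f"
  let ?N = "mat_delete ?A (m+2) (m+1)"
  have d1: "mat_delete ?A (m+2) (m+2) = mat (m+2) (m+2) f"
    by (rule eq_matI) (auto simp: mat_delete_def)
  have d2: "mat_delete ?N (m+1) m = mat (m+1) (m+1) f"
    apply (rule eq_matI)
    apply (auto simp: mat_delete_def)
    subgoal for i j using cl[of i] by (subgoal_tac "j = m") (auto simp: numeral_2_eq_2)
    done
  have o1: "(-1::'a) ^ (m+2+(m+1)) = -1" by (rule neg_one_odd_power) presburger
  have o2: "(-1::'a) ^ (m+1+m) = -1" by (rule neg_one_odd_power) presburger
  have e1: "(-1::'a) ^ (m+2+(m+2)) = 1" by (rule neg_one_even_power) presburger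
  have Nc: "?N \<in> carrier_mat (m+2) (m+2)" unfolding mat_delete_def by auto
  have "det ?N = (\<Sum>j<m+2. ?N $$ (m+1,j) * cofactor ?N (m+1) j)"
    by (rule laplace_expansion_row[OF Nc]) simp
  also have "\<dots> = (\<Sum>j<m. ?N $$ (m+1,j) * cofactor ?N (m+1) j)
       + ?N $$ (m+1,m) * cofactor ?N (m+1) m + ?N $$ (m+1,m+1) * cofactor ?N (m+1) (m+1)"
    by (simp add: numeral_2_eq_2)
  also have "(\<Sum>j<m. ?N $$ (m+1,j) * cofactor ?N (m+1) j) = 0"
    by (rule sum.neutral) (auto simp: mat_delete_def r2[simplified])
  also have "?N $$ (m+1,m) = f (m+1,m)" by (simp add: mat_delete_def)
  also have "?N $$ (m+1,m+1) = 0" by (simp add: mat_delete_def r2b[simplified])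
  finally have dN: "det ?N = - f (m+1,m) * det (mat (m+1) (m+1) f)"
    unfolding cofactor_def d2 o2 by simp
  have Ac: "?A \<in> carrier_mat (m+3) (m+3)" by auto
  have "det ?A = (\<Sum>j<m+3. ?A $$ (m+2,j) * cofactor ?A (m+2) j)"
    by (rule laplace_expansion_row[OF Ac]) simp
  also have "\<dots> = (\<Sum>j<Suc m. ?A $$ (m+2,j) * cofactor ?A (m+2) j)
       + ?A $$ (m+2,m+1) * cofactor ?A (m+2) (m+1) + ?A $$ (m+2,m+2) * cofactor ?A (m+2) (m+2)"
    by (simp add: numeral_3_eq_3)
  also have "(\<Sum>j<Suc m. ?A $$ (m+2,j) * cofactor ?A (m+2) j) = 0"
    by (rule sum.neutral) (auto simp: r1[simplified])
  also have "?A $$ (m+2,m+1) = f (m+2,m+1)" by simp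
  also have "?A $$ (m+2,m+2) = f (m+2,m+2)" by simp
  finally show ?thesis
    unfolding cofactor_def d1 dN o1 e1 by (simp add: algebra_simps)
qed


definition wf :: "real \<Rightarrow> real \<Rightarrow> nat \<times> nat \<Rightarrow> real" where
  "wf s t = (\<lambda>(i,j). if (i,j) = (0,0) then s else if (i,j) = (1,0) then t
     else if i = j + 1 then s else if i > j + 1 then 0 else if even (j - i) then t else 0)"

lemma W_rec:
  assumes "m \<ge> 1"
  shows "det (mat (m+3) (m+3) (wf s t)) = t * det (mat (m+2) (m+2) (wf s t))
          + s * s * det (mat (m+1) (m+1) (wf s t))"
proof -
  have "det (mat (m+3) (m+3) (wf s t)) = wf s t (m+2,m+2) * det (mat (m+2) (m+2) (wf s t))
          + wf s t (m+2,m+1) * wf s t (m+1,m) * det (mat (m+1) (m+1) (wf s t))"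
  proof (rule det_rec)
    show "\<And>j. j < Suc m \<Longrightarrow> wf s t (m+2, j) = 0" by (auto simp: wf_def)
    show "\<And>j. j < m \<Longrightarrow> wf s t (m+1, j) = 0" by (auto simp: wf_def)
    show "wf s t (m+1, m+2) = 0" by (auto simp: wf_def)
    show "\<And>i. i < Suc m \<Longrightarrow> wf s t (i, m+2) = wf s t (i, m)"
      using assms by (auto simp: wf_def Suc_diff_le)
  qed
  then show ?thesis using assms by (simp add: wf_def)
qed

lemma X_eq:
  assumes "m \<ge> 1"
  shows "X (m+3) s t = mat (m+3) (m+3) (\<lambda>(i,j). if (i,j) = (m+2,m+1) then t
     else if (i,j) = (m+2,m+2) then s else wf s t (i,j))"
  by (rule eq_matI) (auto simp: X_def U_def wf_def)

lemma X_det: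
  assumes "m \<ge> 1"
  shows "det (X (m+3) s t) = s * det (mat (m+2) (m+2) (wf s t))
          + t * s * det (mat (m+1) (m+1) (wf s t))"
proof -
  define h where "h = (\<lambda>(i,j). if (i,j) = (m+2,m+1) then t
     else if (i,j) = (m+2,m+2) then s else wf s t (i,j))"
  have "det (mat (m+3) (m+3) h) = h (m+2,m+2) * det (mat (m+2) (m+2) h)
          + h (m+2,m+1) * h (m+1,m) * det (mat (m+1) (m+1) h)"
  proof (rule det_rec)
    show "\<And>j. j < Suc m \<Longrightarrow> h (m+2, j) = 0" by (auto simp: h_def wf_def)
    show "\<And>j. j < m \<Longrightarrow> h (m+1, j) = 0" by (auto simp: h_def wf_def)
    show "h (m+1, m+2) = 0" by (auto simp: h_def wf_def)
    show "\<And>i. i < Suc m \<Longrightarrow> h (i, m+2) = h (i, m)"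
      using assms by (auto simp: h_def wf_def Suc_diff_le)
  qed
  moreover have "mat (m+2) (m+2) h = mat (m+2) (m+2) (wf s t)"
    by (rule eq_matI) (auto simp: h_def)
  moreover have "mat (m+1) (m+1) h = mat (m+1) (m+1) (wf s t)"
    by (rule eq_matI) (auto simp: h_def)
  moreover have "X (m+3) s t = mat (m+3) (m+3) h" unfolding h_def by (rule X_eq[OF assms])
  ultimately show ?thesis using assms by (simp add: h_def wf_def)
qed

lemma Pr_eq: "Pr n = swaprows_mat n 0 1"
  by (rule eq_matI) (auto simp: Pr_def Transposition.transpose_def)

lemma Pc_eq: "Pc n = swaprows_mat n (n-2) (n-1)"
  by (rule eq_matI) (auto simp: Pc_def Transposition.transpose_def)

lemma Urc_det:
  assumes "n \<ge> 2"
  shows "det (Urc n s t) = det (X n s t)"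
proof -
  have X: "X n s t \<in> carrier_mat n n" by (simp add: X_def)
  have P1: "Pr n \<in> carrier_mat n n" "Pc n \<in> carrier_mat n n" by (simp_all add: Pr_eq Pc_eq)
  have d1: "det (Pr n) = -1" unfolding Pr_eq by (rule det_swaprows_mat) (use assms in auto)
  have d2: "det (Pc n) = -1" unfolding Pc_eq by (rule det_swaprows_mat) (use assms in auto)
  have "det (Urc n s t) = det (Pr n * X n s t) * det (Pc n)"
    unfolding Urc_def by (rule det_mult[OF mult_carrier_mat[OF P1(1) X] P1(2)])
  also have "\<dots> = det (Pr n) * det (X n s t) * det (Pc n)"
    by (simp add: det_mult[OF P1(1) X])
  finally show ?thesis using d1 d2 by simp
qed

lemma det2: "det (mat 2 2 f) = f (0,0) * f (1,1) - f (0,1) * (f (1,0) :: 'a :: comm_ring_1)"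
proof -
  have "det (mat 2 2 f) = (\<Sum>j<2. mat 2 2 f $$ (0,j) * cofactor (mat 2 2 f) 0 j)"
    by (rule laplace_expansion_row) auto
  also have "\<dots> = f (0,0) * f (1,1) - f (0,1) * f (1,0)"
    by (simp add: numeral_2_eq_2 cofactor_def mat_delete_def det_single)
  finally show ?thesis .
qed

lemma lessThan_3: "{..<3::nat} = {0,1,2}" by auto

lemma det3: "det (mat 3 3 f) = f (0,0) * (f (1,1) * f (2,2) - f (1,2) * f (2,1))
   - f (0,1) * (f (1,0) * f (2,2) - f (1,2) * f (2,0))
   + f (0,2) * (f (1,0) * f (2,1) - f (1,1) * (f (2,0) :: 'a :: comm_ring_1))"
proof -
  have m0: "mat_delete (mat 3 3 f) 0 0 = mat 2 2 (\<lambda>(i,j). f (if i = 0 then 1 else 2, if j = 0 then 1 else 2))"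
    by (rule eq_matI) (auto simp: mat_delete_def less_Suc_eq numeral_2_eq_2)
  have m1: "mat_delete (mat 3 3 f) 0 1 = mat 2 2 (\<lambda>(i,j). f (if i = 0 then 1 else 2, if j = 0 then 0 else 2))"
    by (rule eq_matI) (auto simp: mat_delete_def less_Suc_eq numeral_2_eq_2)
  have m2: "mat_delete (mat 3 3 f) 0 2 = mat 2 2 (\<lambda>(i,j). f (if i = 0 then 1 else 2, if j = 0 then 0 else 1))"
    by (rule eq_matI) (auto simp: mat_delete_def less_Suc_eq numeral_2_eq_2)
  have c0: "cofactor (mat 3 3 f) 0 0 = f (1,1) * f (2,2) - f (1,2) * f (2,1)"
    unfolding cofactor_def m0 det2 by simp
  have c1: "cofactor (mat 3 3 f) 0 1 = - (f (1,0) * f (2,2) - f (1,2) * f (2,0))"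
    unfolding cofactor_def m1 det2 by simp
  have c2: "cofactor (mat 3 3 f) 0 2 = f (1,0) * f (2,1) - f (1,1) * f (2,0)"
    unfolding cofactor_def m2 det2 by simp
  have "det (mat 3 3 f) = (\<Sum>j<3. mat 3 3 f $$ (0,j) * cofactor (mat 3 3 f) 0 j)"
    by (rule laplace_expansion_row) auto
  also have "\<dots> = f (0,0) * cofactor (mat 3 3 f) 0 0 + f (0,1) * cofactor (mat 3 3 f) 0 1
     + f (0,2) * cofactor (mat 3 3 f) 0 2"
    unfolding lessThan_3 by simp
  finally show ?thesis unfolding c0 c1 c2 by (simp add: algebra_simps)
qed

lemma w2: "det (mat 2 2 (wf s t)) = s * t"
  by (simp add: det2 wf_def)

lemma w3: "det (mat 3 3 (wf s t)) = 2 * s * t^2"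
  by (simp add: det3 wf_def power2_eq_square)

theorem proposition4p3:
  fixes s t :: real
  shows "det (Urc 4 s t) = 3 * s^2 * t^2
       \<and> det (Urc 5 s t) = s^4 * t + 4 * s^2 * t^3
       \<and> (\<forall>n\<ge>6. det (Urc n s t) = t * det (Urc (n-1) s t) + s^2 * det (Urc (n-2) s t))"
proof (intro conjI allI impI)
  have w4: "det (mat 4 4 (wf s t)) = t * (2 * s * t^2) + s * s * (s * t)"
    using W_rec[of 1 s t] w2 w3 by (simp add: numeral_eq_Suc)
  have "det (Urc 4 s t) = det (X (1+3) s t)" by (simp add: Urc_det)
  also have "\<dots> = s * (2 * s * t^2) + t * s * (s * t)"
    using X_det[of 1 s t] w2 w3 by (simp add: numeral_eq_Suc)
  finally show "det (Urc 4 s t) = 3 * s^2 * t^2" by (simp add: algebra_simps power2_eq_square)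
  have "det (Urc 5 s t) = det (X (2+3) s t)" by (simp add: Urc_det)
  also have "\<dots> = s * (t * (2 * s * t^2) + s * s * (s * t)) + t * s * (2 * s * t^2)"
    using X_det[of 2 s t] w3 w4 by (simp add: numeral_eq_Suc)
  finally show "det (Urc 5 s t) = s^4 * t + 4 * s^2 * t^3" by (simp add: algebra_simps power2_eq_square power3_eq_cube power4_eq_xxxx)
  fix n :: nat assume n: "n \<ge> 6"
  then obtain m where m: "n = m + 6" by (metis add.commute le_add_diff_inverse)
  define w where "w k = det (mat k k (wf s t))" for k
  have u: "\<And>k. det (Urc (k+3) s t) = det (X (k+3) s t)" by (rule Urc_det) simp
  have x: "\<And>k. k \<ge> 1 \<Longrightarrow> det (X (k+3) s t) = s * w (k+2) + t * s * w (k+1)"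
    unfolding w_def by (rule X_det)
  have wr: "\<And>k. k \<ge> 1 \<Longrightarrow> w (k+3) = t * w (k+2) + s * s * w (k+1)"
    unfolding w_def by (rule W_rec)
  have "det (Urc n s t) = det (Urc (m+3+3) s t)" using m by (simp add: ac_simps)
  also have "\<dots> = s * w (m+3+2) + t * s * w (m+3+1)" using u[of "m+3"] x[of "m+3"] by simp
  finally have a: "det (Urc n s t) = s * w (m+5) + t * s * w (m+4)" by (simp add: numeral_eq_Suc)
  have "det (Urc (n-1) s t) = det (Urc (m+2+3) s t)" using m by (simp add: ac_simps)
  also have "\<dots> = s * w (m+2+2) + t * s * w (m+2+1)" using u[of "m+2"] x[of "m+2"] by simp
  finally have b: "det (Urc (n-1) s t) = s * w (m+4) + t * s * w (m+3)" by (simp add: numeral_eq_Suc)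
  have "det (Urc (n-2) s t) = det (Urc (m+1+3) s t)" using m by (simp add: ac_simps)
  also have "\<dots> = s * w (m+1+2) + t * s * w (m+1+1)" using u[of "m+1"] x[of "m+1"] by simp
  finally have c: "det (Urc (n-2) s t) = s * w (m+3) + t * s * w (m+2)" by (simp add: numeral_eq_Suc)
  have r1: "w (m+5) = t * w (m+4) + s * s * w (m+3)"
    using wr[of "m+2"] by (simp add: numeral_eq_Suc)
  have r2: "w (m+4) = t * w (m+3) + s * s * w (m+2)"
    using wr[of "m+1"] by (simp add: numeral_eq_Suc)
  show "det (Urc n s t) = t * det (Urc (n-1) s t) + s^2 * det (Urc (n-2) s t)"
    unfolding a b c r1 r2 by (simp add: algebra_simps power2_eq_square)
qed

end
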